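(* Let $(t_1,s_1),(t_2,s_2)\in\mathbb{C}^\times\times\mathbb{C}^\times$ with $t_1\ne t_2$ and $s_1\neq s_2$, let $X_1=A_2(t_1,s_1)$, $X_2=A_2(t_2,s_2)$, let $\varepsilon_0=\det(X_1)+\det(X_2)-\det(X_1+X_2)$, and for $n\in\mathbb{N}$ let $f_n(z)=\sum_{k=0}^{\lfloor n/2\rfloor}(-1)^k\frac{n}{n-k}\binom{n-k}{k}z^{n-2k}$. Then $(X_1X_2)^n+(X_2X_1)^n=f_n(\varepsilon_0)I_2$ for all $n\in\mathbb{N}$.
   Context: $\mathbb{C}^\times=\mathbb{C}\setminus\{0\}$; $A_2(t,s)=\begin{pmatrix} t & s\\ \frac{1-t^2}{s} & -t\end{pmatrix}$; $I_2$ is the $2\times2$ identity matrix; $\lfloor n/2\rfloor$ is the largest integer $\le n/2$. *)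

theory Defs
  imports Complex_Main "Jordan_Normal_Form.Determinant"
begin

definition A2 :: "complex \<Rightarrow> complex \<Rightarrow> complex mat" where
  "A2 t s = mat_of_rows_list 2 [[t, s], [(1 - t^2) / s, - t]]"

definition f_poly :: "nat \<Rightarrow> complex \<Rightarrow> complex" where
  "f_poly n z = (\<Sum>k = 0..n div 2. (-1) ^ k * (of_nat n / of_nat (n - k))
                    * of_nat ((n - k) choose k) * z ^ (n - 2 * k))"

end

theory Submission
  imports Defs
begin

definition T :: "nat \<Rightarrow> nat \<Rightarrow> complex \<Rightarrow> complex" where
  "T n k z = (-1)^k * of_nat ((n-k) choose k) * z^(n-2*k)"
definition U :: "nat \<Rightarrow> complex \<Rightarrow> complex" where
  "U n z = (\<Sum>k\<le>n. T n k z)"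

lemma T_zero: "n div 2 < k \<Longrightarrow> T n k z = 0"
  unfolding T_def by (simp add: binomial_eq_0)

lemma sum_T_ext: "n div 2 \<le> m \<Longrightarrow> (\<Sum>k\<le>m. T n k z) = (\<Sum>k\<le>n div 2. T n k z)"
  by (rule sum.mono_neutral_right) (auto simp: T_zero)

lemma U_ext: assumes "n div 2 \<le> m" shows "U n z = (\<Sum>k\<le>m. T n k z)"
proof -
  have "U n z = (\<Sum>k\<le>n div 2. T n k z)" unfolding U_def by (rule sum_T_ext) simp
  also have "\<dots> = (\<Sum>k\<le>m. T n k z)" by (rule sum_T_ext[OF assms, symmetric])
  finally show ?thesis .
qed

lemma T_step: "T (n+2) (k+1) z = z * T (n+1) (k+1) z - T n k z"
proof (cases "k \<le> n div 2")
  case True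
  have e1: "n + 2 - (k+1) = Suc (n - k)" using True by auto
  have e2: "n + 1 - (k+1) = n - k" by auto
  have c: "(Suc (n-k) choose Suc k) = ((n-k) choose k) + ((n-k) choose Suc k)" by simp
  show ?thesis
  proof (cases "n = 2*k")
    case True
    then show ?thesis unfolding T_def e1 e2 c by (simp add: binomial_eq_0 algebra_simps)
  next
    case False
    with True have "n - 2*k = Suc (n + 1 - 2*(k+1))" by auto
    moreover have "n + 2 - 2*(k+1) = n - 2*k" by auto
    ultimately show ?thesis unfolding T_def e1 e2 c by (simp add: algebra_simps)
  qed
next
  case False
  then show ?thesis by (simp add: T_zero)
qed

lemma U_rec: "U (n+2) z = z * U (n+1) z - U n z"
proof -
  have "U (n+2) z = (\<Sum>k\<le>Suc (n+1). T (n+2) k z)" unfolding U_def by simp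
  also have "\<dots> = T (n+2) 0 z + (\<Sum>k\<le>n+1. T (n+2) (Suc k) z)"
    by (subst sum.atMost_Suc_shift) simp
  also have "\<dots> = z * T (n+1) 0 z + (\<Sum>k\<le>n+1. z * T (n+1) (Suc k) z - T n k z)"
  proof -
    have h0: "T (n+2) 0 z = z * T (n+1) 0 z" by (simp add: T_def)
    have hs: "\<And>k. T (n+2) (Suc k) z = z * T (n+1) (Suc k) z - T n k z"
      using T_step[of n _ z] by (simp only: Suc_eq_plus1)
    show ?thesis by (simp only: h0 hs)
  qed
  also have "\<dots> = z * (T (n+1) 0 z + (\<Sum>k\<le>n+1. T (n+1) (Suc k) z)) - (\<Sum>k\<le>n+1. T n k z)"
    by (simp add: sum_subtractf sum_distrib_left algebra_simps)
  also have "T (n+1) 0 z + (\<Sum>k\<le>n+1. T (n+1) (Suc k) z) = (\<Sum>k\<le>Suc (n+1). T (n+1) k z)"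
    by (subst sum.atMost_Suc_shift) simp
  also have "\<dots> = U (n+1) z" by (rule U_ext[symmetric]) simp
  also have "(\<Sum>k\<le>n+1. T n k z) = U n z" by (rule U_ext[symmetric]) simp
  finally show ?thesis .
qed

definition F :: "nat \<Rightarrow> nat \<Rightarrow> complex \<Rightarrow> complex" where
  "F n k z = (-1) ^ k * (of_nat n / of_nat (n - k)) * of_nat ((n - k) choose k) * z ^ (n - 2 * k)"

lemma f_F: "f_poly n z = (\<Sum>k\<le>n div 2. F n k z)"
  unfolding f_poly_def F_def by (simp only: atLeast0AtMost)

lemma F_step: assumes "j+1 \<le> (m+2) div 2"
  shows "F (m+2) (j+1) z = T (m+2) (j+1) z - T m j z"
proof -
  have jm: "j \<le> m - j" using assms by auto
  have e1: "m + 2 - (j+1) = Suc (m - j)" using assms by auto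
  have e3: "m+2 - 2*(j+1) = m - 2*j" by auto
  have key: "Suc j * (Suc (m-j) choose Suc j) = Suc (m-j) * ((m-j) choose j)"
    by (rule Suc_times_binomial)
  have nat: "Suc (m-j) * ((Suc (m-j) choose Suc j) + ((m-j) choose j)) = (m+2) * (Suc (m-j) choose Suc j)"
  proof -
    have "Suc (m-j) * ((Suc (m-j) choose Suc j) + ((m-j) choose j))
        = Suc (m-j) * (Suc (m-j) choose Suc j) + Suc j * (Suc (m-j) choose Suc j)"
      using key by (simp add: algebra_simps)
    also have "\<dots> = (Suc (m-j) + Suc j) * (Suc (m-j) choose Suc j)" by (simp add: algebra_simps)
    also have "Suc (m-j) + Suc j = m+2" using jm by auto
    finally show ?thesis .
  qed
  hence natc: "of_nat (Suc (m-j)) * (of_nat (Suc (m-j) choose Suc j) + of_nat ((m-j) choose j)) = (of_nat (m+2) * of_nat (Suc (m-j) choose Suc j) :: complex)"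
    by (simp only: of_nat_add[symmetric] of_nat_mult[symmetric])
  have "(of_nat (m+2) / of_nat (Suc (m-j))) * of_nat (Suc (m-j) choose Suc j) = (of_nat (Suc (m-j) choose Suc j) + of_nat ((m-j) choose j) :: complex)"
    using natc by (simp add: field_simps del: of_nat_Suc)
  hence eq: "(of_nat (m+2) / of_nat (Suc (m-j))) * of_nat (Suc (m-j) choose Suc j) = (of_nat (Suc (m-j) choose Suc j) + of_nat ((m-j) choose j) :: complex)" .
  have "F (m+2) (j+1) z = (-1)^(j+1) * ((of_nat (m+2) / of_nat (Suc (m-j))) * of_nat (Suc (m-j) choose Suc j)) * z^(m-2*j)"
    unfolding F_def e1 e3 by (simp only: mult.assoc Suc_eq_plus1)
  also have "\<dots> = (-1)^(j+1) * (of_nat (Suc (m-j) choose Suc j) + of_nat ((m-j) choose j)) * z^(m-2*j)"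
    by (simp only: eq)
  also have "\<dots> = T (m+2) (j+1) z - T m j z"
    unfolding T_def e1 e3 by (simp add: algebra_simps)
  finally show ?thesis .
qed
lemma F0: "n \<ge> 1 \<Longrightarrow> F n 0 z = T n 0 z"
  unfolding F_def T_def by simp

lemma f_eq: "f_poly (m+2) z = U (m+2) z - U m z"
proof -
  have d: "(m+2) div 2 = Suc (m div 2)" by simp
  have "f_poly (m+2) z = F (m+2) 0 z + (\<Sum>j\<le>m div 2. F (m+2) (Suc j) z)"
    unfolding f_F d by (subst sum.atMost_Suc_shift) simp
  also have "\<dots> = T (m+2) 0 z + (\<Sum>j\<le>m div 2. T (m+2) (Suc j) z - T m j z)"
    using F_step[of _ m z] F0[of "m+2" z] by (intro arg_cong2[where f="(+)"] sum.cong) auto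
  also have "\<dots> = (\<Sum>k\<le>Suc (m div 2). T (m+2) k z) - (\<Sum>j\<le>m div 2. T m j z)"
    by (subst sum.atMost_Suc_shift) (simp add: sum_subtractf)
  also have "\<dots> = U (m+2) z - U m z"
    using U_ext[of "m+2" "Suc (m div 2)" z] U_ext[of m "m div 2" z] by simp
  finally show ?thesis .
qed

lemma U0: "U 0 z = 1" unfolding U_def T_def by simp
lemma U1: "U 1 z = z" unfolding U_def T_def by simp
lemma f1: "f_poly 1 z = z" unfolding f_poly_def by simp
lemma f2: "f_poly 2 z = z^2 - 2"
proof -
  have a: "f_poly 2 z = U 2 z - U 0 z" using f_eq[of 0 z] by (simp add: numeral_2_eq_2 numeral_3_eq_3)
  have b: "U 2 z = z * U 1 z - U 0 z" using U_rec[of 0 z] by (simp add: numeral_2_eq_2 numeral_3_eq_3)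
  show ?thesis unfolding a b U0 U1 by (simp add: power2_eq_square)
qed

lemma f_rec: "n \<ge> 1 \<Longrightarrow> f_poly (n+2) z = z * f_poly (n+1) z - f_poly n z"
proof (cases "n = 1")
  case True
  have a: "f_poly 3 z = U 3 z - U 1 z" using f_eq[of 1 z] by (simp add: numeral_2_eq_2 numeral_3_eq_3)
  have b: "U 3 z = z * U 2 z - U 1 z" using U_rec[of 1 z] by (simp add: numeral_2_eq_2 numeral_3_eq_3)
  have c: "f_poly 2 z = U 2 z - U 0 z" using f_eq[of 0 z] by (simp add: numeral_2_eq_2 numeral_3_eq_3)
  have "f_poly 3 z = z * f_poly 2 z - f_poly 1 z" unfolding a b c f1 U0 U1 by (simp add: algebra_simps)
  then show ?thesis using True by (simp add: numeral_2_eq_2 numeral_3_eq_3)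
next
  case False
  assume "n \<ge> 1"
  with False obtain m where m: "n = m + 2" by (intro that[of "n-2"]) simp
  have n1: "m+2+1 = m+1+2" by simp
  have n2: "m+1+1 = m+2" by simp
  have a: "f_poly (m+2+2) z = U (m+2+2) z - U (m+2) z" by (rule f_eq)
  have b: "f_poly (m+1+2) z = U (m+1+2) z - U (m+1) z" by (rule f_eq)
  have c: "f_poly (m+2) z = U (m+2) z - U m z" by (rule f_eq)
  have d: "U (m+2+2) z = z * U (m+1+2) z - U (m+2) z" using U_rec[of "m+2" z] by (simp only: n1)
  have e: "U (m+1+2) z = z * U (m+2) z - U (m+1) z" using U_rec[of "m+1" z] by (simp only: n2)
  have g: "U (m+2) z = z * U (m+1) z - U m z" by (rule U_rec)
  have "f_poly (m+2+2) z = z * f_poly (m+1+2) z - f_poly (m+2) z"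
    unfolding a b c d e g by (simp add: algebra_simps)
  then show ?thesis using m n1 by simp
qed

lemma mat2_eqI:
  assumes "A \<in> carrier_mat 2 2" "B \<in> carrier_mat 2 2"
    "\<And>i j. i < 2 \<Longrightarrow> j < 2 \<Longrightarrow> A $$ (i,j) = B $$ (i,j)"
  shows "A = B"
  using assms by (intro eq_matI) auto

lemma mult2: assumes "A \<in> carrier_mat 2 2" "B \<in> carrier_mat 2 2" "i < 2" "j < 2"
  shows "(A * B) $$ (i,j) = A $$ (i,0) * B $$ (0,j) + A $$ (i,1) * B $$ (1,j)"
  using assms by (simp add: scalar_prod_def numeral_2_eq_2)

lemma sq_lemma:
  fixes P Q :: "complex mat"
  assumes P: "P \<in> carrier_mat 2 2" and Q: "Q \<in> carrier_mat 2 2"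
    and PQ: "P * Q = 1\<^sub>m 2" and S: "P + Q = e \<cdot>\<^sub>m 1\<^sub>m 2"
  shows "P * P = e \<cdot>\<^sub>m P - 1\<^sub>m 2"
proof -
  have "P * (P + Q) = P * P + P * Q" using P Q by (simp add: mult_add_distrib_mat)
  moreover have "P * (P + Q) = e \<cdot>\<^sub>m P" unfolding S using P by (simp add: mult_smult_distrib[OF P one_carrier_mat])
  ultimately have H: "P * P + 1\<^sub>m 2 = e \<cdot>\<^sub>m P" using PQ by simp
  show ?thesis
  proof (rule mat2_eqI)
    show "P * P \<in> carrier_mat 2 2" using P by simp
    show "e \<cdot>\<^sub>m P - 1\<^sub>m 2 \<in> carrier_mat 2 2" using P by (simp add: minus_carrier_mat)
    fix i j :: nat assume ij: "i < 2" "j < 2"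
    have "(P * P + 1\<^sub>m 2) $$ (i,j) = (e \<cdot>\<^sub>m P) $$ (i,j)" using H by simp
    then show "(P * P) $$ (i,j) = (e \<cdot>\<^sub>m P - 1\<^sub>m 2) $$ (i,j)" using ij P by (auto simp: algebra_simps split: if_splits)
  qed
qed

lemma pow_lemma:
  fixes P Q :: "complex mat"
  assumes P: "P \<in> carrier_mat 2 2" and Q: "Q \<in> carrier_mat 2 2"
    and PQ: "P * Q = 1\<^sub>m 2" and S: "P + Q = e \<cdot>\<^sub>m 1\<^sub>m 2"
  shows "P ^\<^sub>m (Suc (Suc n)) = e \<cdot>\<^sub>m P ^\<^sub>m (Suc n) - P ^\<^sub>m n"
proof -
  have Pn: "P ^\<^sub>m n \<in> carrier_mat 2 2" using P by simp
  have "P ^\<^sub>m (Suc (Suc n)) = P ^\<^sub>m n * P * P" by simp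
  also have "\<dots> = P ^\<^sub>m n * (P * P)" by (rule assoc_mult_mat[OF Pn P P])
  also have "\<dots> = P ^\<^sub>m n * (e \<cdot>\<^sub>m P - 1\<^sub>m 2)" using sq_lemma[OF P Q PQ S] by simp
  also have "\<dots> = P ^\<^sub>m n * (e \<cdot>\<^sub>m P) - P ^\<^sub>m n * 1\<^sub>m 2"
    using P Pn by (simp add: mult_minus_distrib_mat[OF Pn smult_carrier_mat[OF P] one_carrier_mat])
  also have "\<dots> = e \<cdot>\<^sub>m P ^\<^sub>m (Suc n) - P ^\<^sub>m n"
    using P Pn by (simp add: mult_smult_distrib[OF Pn P])
  finally show ?thesis .
qed

lemma pow_sum:
  fixes P Q :: "complex mat" and f :: "nat \<Rightarrow> complex"
  assumes P: "P \<in> carrier_mat 2 2" and Q: "Q \<in> carrier_mat 2 2"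
    and PQ: "P * Q = 1\<^sub>m 2" and QP: "Q * P = 1\<^sub>m 2" and S: "P + Q = e \<cdot>\<^sub>m 1\<^sub>m 2"
    and f1: "f 1 = e" and f2: "f 2 = e^2 - 2"
    and frec: "\<And>n. n \<ge> 1 \<Longrightarrow> f (n+2) = e * f (n+1) - f n"
  shows "P ^\<^sub>m (n+1) + Q ^\<^sub>m (n+1) = f (n+1) \<cdot>\<^sub>m 1\<^sub>m 2 \<and> P ^\<^sub>m (n+2) + Q ^\<^sub>m (n+2) = f (n+2) \<cdot>\<^sub>m 1\<^sub>m 2"
proof (induction n)
  case 0
  have s1: "P ^\<^sub>m 1 + Q ^\<^sub>m 1 = f 1 \<cdot>\<^sub>m 1\<^sub>m 2" using P Q S f1 by simp
  have s2: "P ^\<^sub>m 2 + Q ^\<^sub>m 2 = f 2 \<cdot>\<^sub>m 1\<^sub>m 2"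
  proof -
    have a: "P ^\<^sub>m 2 = e \<cdot>\<^sub>m P - 1\<^sub>m 2" using sq_lemma[OF P Q PQ S] P by (simp add: numeral_2_eq_2)
    have QS: "Q + P = e \<cdot>\<^sub>m 1\<^sub>m 2" using S P Q by (simp add: comm_add_mat)
    have b: "Q ^\<^sub>m 2 = e \<cdot>\<^sub>m Q - 1\<^sub>m 2" using sq_lemma[OF Q P QP QS] Q by (simp add: numeral_2_eq_2)
    show ?thesis
    proof (rule mat2_eqI)
      show "P ^\<^sub>m 2 + Q ^\<^sub>m 2 \<in> carrier_mat 2 2" using P Q by simp
      show "f 2 \<cdot>\<^sub>m 1\<^sub>m 2 \<in> carrier_mat 2 2" by simp
      fix i j :: nat assume ij: "i < 2" "j < 2"
      have "(P + Q) $$ (i,j) = (e \<cdot>\<^sub>m 1\<^sub>m 2) $$ (i,j)" using S by simp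
      hence hh: "P $$ (i,j) + Q $$ (i,j) = e * (1\<^sub>m 2 :: complex mat) $$ (i,j)" using ij P Q by simp
      have "(P ^\<^sub>m 2 + Q ^\<^sub>m 2) $$ (i,j) = e * (P $$ (i,j) + Q $$ (i,j)) - 2 * (1\<^sub>m 2 :: complex mat) $$ (i,j)"
        unfolding a b using ij P Q by (simp add: algebra_simps)
      also have "\<dots> = (f 2 \<cdot>\<^sub>m 1\<^sub>m 2) $$ (i,j)" unfolding hh f2 using ij by (simp add: power2_eq_square algebra_simps)
      finally show "(P ^\<^sub>m 2 + Q ^\<^sub>m 2) $$ (i,j) = (f 2 \<cdot>\<^sub>m 1\<^sub>m 2) $$ (i,j)" .
    qed
  qed
  show ?case using s1 s2 by (simp only: add_0)
next
  case (Suc n)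
  have IH1: "P ^\<^sub>m (n+1) + Q ^\<^sub>m (n+1) = f (n+1) \<cdot>\<^sub>m 1\<^sub>m 2" using Suc by simp
  have IH2: "P ^\<^sub>m (n+2) + Q ^\<^sub>m (n+2) = f (n+2) \<cdot>\<^sub>m 1\<^sub>m 2" using Suc by simp
  have QS: "Q + P = e \<cdot>\<^sub>m 1\<^sub>m 2" using S P Q by (simp add: comm_add_mat)
  have a: "P ^\<^sub>m (n+3) = e \<cdot>\<^sub>m P ^\<^sub>m (n+2) - P ^\<^sub>m (n+1)"
    using pow_lemma[OF P Q PQ S, of "n+1"] by (simp add: numeral_3_eq_3 numeral_2_eq_2)
  have b: "Q ^\<^sub>m (n+3) = e \<cdot>\<^sub>m Q ^\<^sub>m (n+2) - Q ^\<^sub>m (n+1)"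
    using pow_lemma[OF Q P QP QS, of "n+1"] by (simp add: numeral_3_eq_3 numeral_2_eq_2)
  have s3: "P ^\<^sub>m (n+3) + Q ^\<^sub>m (n+3) = f (n+3) \<cdot>\<^sub>m 1\<^sub>m 2"
  proof (rule mat2_eqI)
    show "P ^\<^sub>m (n+3) + Q ^\<^sub>m (n+3) \<in> carrier_mat 2 2" using P Q by simp
    show "f (n+3) \<cdot>\<^sub>m 1\<^sub>m 2 \<in> carrier_mat 2 2" by simp
    fix i j :: nat assume ij: "i < 2" "j < 2"
    have h1: "(P ^\<^sub>m (n+1) + Q ^\<^sub>m (n+1)) $$ (i,j) = (f (n+1) \<cdot>\<^sub>m 1\<^sub>m 2) $$ (i,j)" using IH1 by simp
    have h2: "(P ^\<^sub>m (n+2) + Q ^\<^sub>m (n+2)) $$ (i,j) = (f (n+2) \<cdot>\<^sub>m 1\<^sub>m 2) $$ (i,j)" using IH2 by simp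
    have fr: "f (n+3) = e * f (n+2) - f (n+1)" using frec[of "n+1"] by (simp add: numeral_3_eq_3 numeral_2_eq_2)
    have h1': "(P ^\<^sub>m (n+1)) $$ (i,j) + (Q ^\<^sub>m (n+1)) $$ (i,j) = f (n+1) * (1\<^sub>m 2 :: complex mat) $$ (i,j)"
      using h1 ij P Q by simp
    have h2': "(P ^\<^sub>m (n+2)) $$ (i,j) + (Q ^\<^sub>m (n+2)) $$ (i,j) = f (n+2) * (1\<^sub>m 2 :: complex mat) $$ (i,j)"
      using h2 ij P Q by simp
    have "(P ^\<^sub>m (n+3) + Q ^\<^sub>m (n+3)) $$ (i,j)
        = e * ((P ^\<^sub>m (n+2)) $$ (i,j) + (Q ^\<^sub>m (n+2)) $$ (i,j)) - ((P ^\<^sub>m (n+1)) $$ (i,j) + (Q ^\<^sub>m (n+1)) $$ (i,j))"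
      unfolding a b using ij P Q by (simp add: algebra_simps)
    also have "\<dots> = f (n+3) * (1\<^sub>m 2 :: complex mat) $$ (i,j)" unfolding h1' h2' fr by (simp add: algebra_simps)
    finally show "(P ^\<^sub>m (n+3) + Q ^\<^sub>m (n+3)) $$ (i,j) = (f (n+3) \<cdot>\<^sub>m 1\<^sub>m 2) $$ (i,j)" using ij by simp
  qed
  show ?case using IH2 s3 by (simp add: numeral_3_eq_3 numeral_2_eq_2)
qed

lemma det1: assumes A: "(A::'a::comm_ring_1 mat) \<in> carrier_mat 1 1" shows "det A = A $$ (0,0)"
proof -
  have "det A = prod_list (diag_mat A)"
    by (rule det_lower_triangular[OF _ A]) simp
  also have "diag_mat A = [A $$ (0,0)]" using A by (simp add: diag_mat_def)
  finally show ?thesis by simp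
qed

lemma det2: assumes A: "(A::'a::comm_ring_1 mat) \<in> carrier_mat 2 2"
  shows "det A = A $$ (0,0)*A$$(1,1) - A$$(0,1)*A$$(1,0)"
proof -
  have D0: "mat_delete A 0 0 \<in> carrier_mat 1 1" using mat_delete_carrier[OF A] by simp
  have D1: "mat_delete A 1 0 \<in> carrier_mat 1 1" using mat_delete_carrier[OF A] by simp
  have e0: "mat_delete A 0 0 $$ (0,0) = A $$ (1,1)" unfolding mat_delete_def using A by auto
  have e1: "mat_delete A 1 0 $$ (0,0) = A $$ (0,1)" unfolding mat_delete_def using A by auto
  have "det A = (\<Sum>i<2. A $$ (i,0) * cofactor A i 0)" by (rule laplace_expansion_column[OF A]) simp
  also have "\<dots> = A $$ (0,0) * cofactor A 0 0 + A $$ (1,0) * cofactor A 1 0"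
    by (simp add: numeral_2_eq_2)
  also have "cofactor A 0 0 = A $$ (1,1)" unfolding cofactor_def det1[OF D0] e0 by simp
  also have "cofactor A 1 0 = - A $$ (0,1)" unfolding cofactor_def det1[OF D1] e1 by simp
  finally show ?thesis by (simp add: algebra_simps)
qed

lemma A2_carrier: "A2 t s \<in> carrier_mat 2 2"
proof -
  have "A2 t s \<in> carrier_mat (length [[t, s], [(1 - t^2) / s, - t]]) 2"
    unfolding A2_def mat_of_rows_list_def by (rule mat_carrier)
  moreover have "length [[t, s], [(1 - t^2) / s, - t]] = 2" by simp
  ultimately show ?thesis by (simp only:)
qed

lemma A2_idx: "A2 t s $$ (0,0) = t" "A2 t s $$ (0,1) = s" "A2 t s $$ (1,0) = (1-t^2)/s" "A2 t s $$ (1,1) = -t"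
  unfolding A2_def by (simp_all add: mat_of_rows_list_def)

lemma A2_idx': "A2 t s $$ (0,Suc 0) = s" "A2 t s $$ (Suc 0,0) = (1-t^2)/s" "A2 t s $$ (Suc 0,Suc 0) = -t"
  unfolding A2_def by (simp_all add: mat_of_rows_list_def)

lemma idx2: "(i::nat) < 2 \<Longrightarrow> i = 0 \<or> i = 1" by auto

lemma A2_sq: assumes "s \<noteq> 0" shows "A2 t s * A2 t s = 1\<^sub>m 2"
proof (rule mat2_eqI)
  show "A2 t s * A2 t s \<in> carrier_mat 2 2" by (rule mult_carrier_mat[OF A2_carrier A2_carrier])
  show "1\<^sub>m 2 \<in> carrier_mat 2 2" by simp
  fix i j :: nat assume ij: "i < 2" "j < 2"
  show "(A2 t s * A2 t s) $$ (i,j) = (1\<^sub>m 2 :: complex mat) $$ (i,j)"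
    using idx2[OF ij(1)] idx2[OF ij(2)] assms
    by (auto simp: mult2[OF A2_carrier A2_carrier ij] A2_idx A2_idx' field_simps power2_eq_square)
qed

lemma A2_det: assumes "s \<noteq> 0" shows "det (A2 t s) = -1"
  using assms by (simp add: det2[OF A2_carrier] A2_idx A2_idx' field_simps power2_eq_square)

lemma anticomm:
  assumes "s1 \<noteq> 0" "s2 \<noteq> 0"
  shows "A2 t1 s1 * A2 t2 s2 + A2 t2 s2 * A2 t1 s1
     = (det (A2 t1 s1) + det (A2 t2 s2) - det (A2 t1 s1 + A2 t2 s2)) \<cdot>\<^sub>m 1\<^sub>m 2"
proof (rule mat2_eqI)
  have C1: "A2 t1 s1 \<in> carrier_mat 2 2" and C2: "A2 t2 s2 \<in> carrier_mat 2 2" by (rule A2_carrier)+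
  have CS: "A2 t1 s1 + A2 t2 s2 \<in> carrier_mat 2 2" using C1 C2 by simp
  show "A2 t1 s1 * A2 t2 s2 + A2 t2 s2 * A2 t1 s1 \<in> carrier_mat 2 2" using C1 C2 by simp
  show "(det (A2 t1 s1) + det (A2 t2 s2) - det (A2 t1 s1 + A2 t2 s2)) \<cdot>\<^sub>m 1\<^sub>m 2 \<in> carrier_mat 2 2" by simp
  fix i j :: nat assume ij: "i < 2" "j < 2"
  have dS: "det (A2 t1 s1 + A2 t2 s2) = (t1+t2)*(-t1-t2) - (s1+s2)*((1-t1^2)/s1 + (1-t2^2)/s2)"
    using C1 C2 by (simp add: det2[OF CS] A2_idx A2_idx')
  have "(A2 t1 s1 * A2 t2 s2 + A2 t2 s2 * A2 t1 s1) $$ (i,j)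
      = (A2 t1 s1 * A2 t2 s2) $$ (i,j) + (A2 t2 s2 * A2 t1 s1) $$ (i,j)" using ij C1 C2 by simp
  also have "\<dots> = (det (A2 t1 s1) + det (A2 t2 s2) - det (A2 t1 s1 + A2 t2 s2)) * (1\<^sub>m 2 :: complex mat) $$ (i,j)"
    using idx2[OF ij(1)] idx2[OF ij(2)]
  proof (elim disjE)
    assume "i = 0" "j = 0" then show ?thesis using assms
      by (simp add: mult2[OF C1 C2] mult2[OF C2 C1] dS A2_det A2_idx A2_idx' field_simps power2_eq_square)
  next
    assume "i = 0" "j = 1" then show ?thesis using assms
      by (simp add: mult2[OF C1 C2] mult2[OF C2 C1] A2_idx A2_idx' field_simps)
  next
    assume "i = 1" "j = 0" then show ?thesis using assms
      by (simp add: mult2[OF C1 C2] mult2[OF C2 C1] A2_idx A2_idx' field_simps)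
  next
    assume "i = 1" "j = 1" then show ?thesis using assms
      by (simp add: mult2[OF C1 C2] mult2[OF C2 C1] dS A2_det A2_idx A2_idx' field_simps power2_eq_square)
  qed
  finally show "(A2 t1 s1 * A2 t2 s2 + A2 t2 s2 * A2 t1 s1) $$ (i,j) = ((det (A2 t1 s1) + det (A2 t2 s2) - det (A2 t1 s1 + A2 t2 s2)) \<cdot>\<^sub>m 1\<^sub>m 2) $$ (i,j)"
    using ij by simp
qed

theorem mainTheorem10:
  fixes t1 s1 t2 s2 :: complex and n :: nat
  assumes "t1 \<noteq> 0" "s1 \<noteq> 0" "t2 \<noteq> 0" "s2 \<noteq> 0"
    and "t1 \<noteq> t2" "s1 \<noteq> s2"
    and "n \<ge> 1"
  shows "let X1 = A2 t1 s1; X2 = A2 t2 s2;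
             \<epsilon>0 = det X1 + det X2 - det (X1 + X2)
         in (X1 * X2) ^\<^sub>m n + (X2 * X1) ^\<^sub>m n = f_poly n \<epsilon>0 \<cdot>\<^sub>m 1\<^sub>m 2"
proof -
  define X1 where "X1 = A2 t1 s1"
  define X2 where "X2 = A2 t2 s2"
  define e where "e = det X1 + det X2 - det (X1 + X2)"
  have C1: "X1 \<in> carrier_mat 2 2" unfolding X1_def by (rule A2_carrier)
  have C2: "X2 \<in> carrier_mat 2 2" unfolding X2_def by (rule A2_carrier)
  have S1: "X1 * X1 = 1\<^sub>m 2" unfolding X1_def using assms(2) by (rule A2_sq)
  have S2: "X2 * X2 = 1\<^sub>m 2" unfolding X2_def using assms(4) by (rule A2_sq)
  have P: "X1 * X2 \<in> carrier_mat 2 2" using C1 C2 by simp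
  have Q: "X2 * X1 \<in> carrier_mat 2 2" using C1 C2 by simp
  have PQ: "(X1 * X2) * (X2 * X1) = 1\<^sub>m 2"
  proof -
    have "(X1 * X2) * (X2 * X1) = X1 * (X2 * (X2 * X1))" by (rule assoc_mult_mat[OF C1 C2 Q])
    also have "X2 * (X2 * X1) = X2 * X2 * X1" by (rule assoc_mult_mat[OF C2 C2 C1, symmetric])
    finally show ?thesis using S1 S2 C1 by simp
  qed
  have QP: "(X2 * X1) * (X1 * X2) = 1\<^sub>m 2"
  proof -
    have "(X2 * X1) * (X1 * X2) = X2 * (X1 * (X1 * X2))" by (rule assoc_mult_mat[OF C2 C1 P])
    also have "X1 * (X1 * X2) = X1 * X1 * X2" by (rule assoc_mult_mat[OF C1 C1 C2, symmetric])
    finally show ?thesis using S1 S2 C2 by simp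
  qed
  have SS: "X1 * X2 + X2 * X1 = e \<cdot>\<^sub>m 1\<^sub>m 2"
    unfolding X1_def X2_def e_def using assms(2,4) by (rule anticomm)
  obtain m where m: "n = m + 1" using assms(7) by (intro that[of "n-1"]) simp
  have "(X1 * X2) ^\<^sub>m (m+1) + (X2 * X1) ^\<^sub>m (m+1) = f_poly (m+1) e \<cdot>\<^sub>m 1\<^sub>m 2"
  proof -
    have h1: "(\<lambda>k. f_poly k e) 1 = e" by (rule f1)
    have h2: "(\<lambda>k. f_poly k e) 2 = e^2 - 2" by (rule f2)
    have h3: "\<And>k. k \<ge> 1 \<Longrightarrow> (\<lambda>k. f_poly k e) (k+2) = e * (\<lambda>k. f_poly k e) (k+1) - (\<lambda>k. f_poly k e) k"
      by (rule f_rec)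
    show ?thesis using pow_sum[OF P Q PQ QP SS h1 h2 h3, of m] by (simp only:)
  qed
  then show ?thesis unfolding Let_def X1_def[symmetric] X2_def[symmetric] e_def[symmetric] m .
qed

end
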